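(* Let $K$ be a finite field of characteristic $p$ and let $d$ be an integer with $\gcd(d,|K|-1)=1$ that is nondegenerate over $K$. Then $|W_{K,d}(a)|<|K|$ for all $a\in K^\times$.
   Context: $\psi_K(x)=\exp(2\pi i\,\mathrm{Tr}_{K/\mathbb{F}_p}(x)/p)$ is the canonical additive character of $K$, and for $a\in K$ the Weil sum is $W_{K,d}(a)=\sum_{x\in K}\psi_K(x^d+ax)$ (a real algebraic integer). $d$ is degenerate over $K$ if $d\equiv p^j\pmod{|K|-1}$ for some integer $j$, and nondegenerate otherwise. *)

theory Defs
  imports "HOL-Analysis.Analysis"
begin

definition field_degree :: "'a::{field,finite} itself \<Rightarrow> nat" where
  "field_degree TYPE('a) = (THE n. CARD('a) = CHAR('a) ^ n)"

definition abs_trace :: "'a::{field,finite} \<Rightarrow> 'a" where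
  "abs_trace x = (\<Sum>j<field_degree TYPE('a). x ^ (CHAR('a) ^ j))"

definition abs_trace_nat :: "'a::{field,finite} \<Rightarrow> nat" where
  "abs_trace_nat x = (THE m. m < CHAR('a) \<and> of_nat m = abs_trace x)"

definition canon_add_char :: "'a::{field,finite} \<Rightarrow> complex" where
  "canon_add_char x =
     exp (2 * pi * \<i> * of_nat (abs_trace_nat x) / of_nat CHAR('a))"

text \<open>Weil sum W_{K,d}(a) = sum over x of psi_K(x^d + a x); x^d with integer d,
  using the power_int operation (so 0^d = 0).\<close>
definition weil_sum :: "int \<Rightarrow> 'a::{field,finite} \<Rightarrow> complex" where
  "weil_sum d a = (\<Sum>x\<in>(UNIV::'a set). canon_add_char (x powi d + a * x))"

definition degenerate :: "'a::{field,finite} itself \<Rightarrow> int \<Rightarrow> bool" where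
  "degenerate TYPE('a) d \<longleftrightarrow>
     (\<exists>j::nat. d mod (int CARD('a) - 1) = (int CHAR('a) ^ j) mod (int CARD('a) - 1))"

end

theory Submission imports Defs "HOL-Computational_Algebra.Polynomial" "HOL-Computational_Algebra.Primes" begin

lemma ff_prime: "prime CHAR('a::{field,finite})"
  using prime_CHAR_semidom finite_imp_CHAR_pos[of, OF finite_class.finite_UNIV] by blast

lemma ff_pow_card: "(x::'a::{field,finite}) ^ CARD('a) = x"
proof (cases "x = 0")
  case False
  have "x * (\<Prod>y\<in>UNIV-{0}. x * y) = x * x ^ (card (UNIV :: 'a set) - 1) * \<Prod>(UNIV-{0})"
    by (simp add: prod.distrib mult_ac)
  also have "x * x ^ (card (UNIV :: 'a set) - 1) = x ^ Suc (card (UNIV :: 'a set) - 1)"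
    by (subst power_Suc) auto
  also have "Suc (card (UNIV :: 'a set) - 1) = card (UNIV :: 'a set)"
    using finite_UNIV_card_ge_0[where ?'a = 'a] by simp
  also have "(\<Prod>y\<in>UNIV-{0}. x * y) = (\<Prod>y\<in>UNIV-{0}. y)"
    by (rule prod.reindex_bij_witness[of _ "\<lambda>y. y / x" "\<lambda>y. x * y"]) (use False in auto)
  finally show ?thesis
    by simp
qed (use finite_UNIV_card_ge_0[where ?'a = 'a] in auto)

lemma ff_card_ge2: "CARD('a::{field,finite}) \<ge> 2"
proof -
  have "{0::'a, 1} \<subseteq> UNIV" by auto
  hence "card {0::'a,1} \<le> CARD('a)" by (intro card_mono) auto
  thus ?thesis by simp
qed

lemma ff_pow_card1: "(x::'a::{field,finite}) \<noteq> 0 \<Longrightarrow> x ^ (CARD('a) - 1) = 1"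
proof -
  assume "x \<noteq> 0"
  have "x * x ^ (CARD('a) - 1) = x * 1"
  proof -
    have "CARD('a) = Suc (CARD('a) - 1)" using ff_card_ge2[where 'a='a] by simp
    hence "x * x ^ (CARD('a) - 1) = x ^ CARD('a)" by (metis power_Suc)
    thus ?thesis using ff_pow_card[of x] by simp
  qed
  thus ?thesis using \<open>x \<noteq> 0\<close> by simp
qed

definition addsub :: "'a::{field,finite} set \<Rightarrow> bool" where
  "addsub H \<longleftrightarrow> 0 \<in> H \<and> (\<forall>x\<in>H. \<forall>y\<in>H. x + y \<in> H)"

lemma addsub_nat: "addsub H \<Longrightarrow> h \<in> H \<Longrightarrow> of_nat m * h \<in> H"
  by (induction m) (auto simp: addsub_def distrib_right)

lemma addsub_neg: "addsub (H::'a::{field,finite} set) \<Longrightarrow> h \<in> H \<Longrightarrow> - h \<in> H"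
proof -
  assume a: "addsub H" "h \<in> H"
  have "of_nat CHAR('a) * h = 0" by simp
  moreover have "CHAR('a) = Suc (CHAR('a) - 1)" using ff_prime[where 'a='a]
    by (metis Suc_pred' prime_gt_0_nat)
  ultimately have "of_nat (CHAR('a) - 1) * h + h = 0"
    by (metis add.commute mult.left_neutral distrib_right of_nat_Suc)
  hence "-h = of_nat (CHAR('a) - 1) * h" by (metis add_eq_0_iff2)
  thus ?thesis using addsub_nat[OF a] by simp
qed

lemma addsub_div: "addsub (H::'a::{field,finite} set) \<Longrightarrow> of_nat c * v \<in> H \<Longrightarrow> (of_nat c::'a) \<noteq> 0 \<Longrightarrow> v \<in> H"
proof -
  assume a: "addsub H" "of_nat c * v \<in> H" "(of_nat c::'a) \<noteq> 0"
  have "(of_nat c::'a) ^ (CARD('a) - 1) = 1" using ff_pow_card1 a(3) by blast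
  moreover have "CARD('a) - 1 = Suc (CARD('a) - 2)" using ff_card_ge2[where 'a='a] by simp
  ultimately have "v = of_nat (c ^ (CARD('a) - 2)) * (of_nat c * v)"
    by (simp only: of_nat_power mult.assoc[symmetric] power_Suc2[symmetric]) simp
  thus ?thesis using addsub_nat[OF a(1,2)] by metis
qed

lemma of_nat_mod_CHAR': "(of_nat (m mod CHAR('a)) :: 'a::{field,finite}) = of_nat m"
proof -
  have "m = m mod CHAR('a) + CHAR('a) * (m div CHAR('a))" by simp
  hence "(of_nat m :: 'a) = of_nat (m mod CHAR('a)) + of_nat CHAR('a) * of_nat (m div CHAR('a))"
    by (metis of_nat_add of_nat_mult)
  thus ?thesis by simp
qed

lemma of_nat_nz: "0 < c \<Longrightarrow> c < CHAR('a::{field,finite}) \<Longrightarrow> (of_nat c :: 'a) \<noteq> 0"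
  by (auto simp: of_nat_eq_0_iff_char_dvd dest: dvd_imp_le)

lemma addsub_grow:
  fixes H :: "'a::{field,finite} set"
  assumes "addsub H" "card H = CHAR('a) ^ k"
  shows "\<exists>k'. CARD('a) = CHAR('a) ^ k'"
  using assms
proof (induction "card (UNIV - H)" arbitrary: H k rule: less_induct)
  case less
  show ?case
  proof (cases "H = UNIV")
    case True thus ?thesis using less.prems by auto
  next
    case False
    then obtain v where v: "v \<notin> H" by auto
    define p where "p = CHAR('a)"
    have p2: "p \<ge> 2" unfolding p_def using ff_prime[where 'a='a] prime_ge_2_nat by blast
    define H' where "H' = (\<lambda>(h,m). h + of_nat m * v) ` (H \<times> {..<p})"
    have inj: "inj_on (\<lambda>(h,m). h + of_nat m * v) (H \<times> {..<p})"
    proof (rule inj_onI, clarsimp)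
      fix h1 m1 h2 m2
      assume h: "h1 \<in> H" "m1 < p" "h2 \<in> H" "m2 < p" and eq: "h1 + of_nat m1 * v = h2 + of_nat m2 * v"
      have key: "m1 = m2" if "h1 \<in> H" "m1 < p" "h2 \<in> H" "m2 < p" "h1 + of_nat m1 * v = h2 + of_nat m2 * v"
          "m1 < m2" for h1 m1 h2 m2
      proof -
        have "h1 - h2 = of_nat (m2 - m1) * v" using that
          by (simp add: of_nat_diff algebra_simps)
        moreover have "h1 - h2 \<in> H" using that less.prems(1) addsub_neg[of H h2]
          unfolding addsub_def by (metis diff_conv_add_uminus)
        moreover have "(of_nat (m2 - m1) :: 'a) \<noteq> 0"
          using of_nat_nz[where 'a='a, of "m2 - m1"] that unfolding p_def by auto
        ultimately have "v \<in> H"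
          using addsub_div[OF less.prems(1), of "m2 - m1" v] by auto
        thus ?thesis using v by blast
      qed
      have "m1 = m2"
        using key[OF h eq] key[OF h(3,4,1,2) eq[symmetric]] by linarith
      thus "h1 = h2 \<and> m1 = m2" using eq by simp
    qed
    have cardH': "card H' = CHAR('a) ^ Suc k"
      unfolding H'_def using card_image[OF inj] less.prems(2) by (simp add: card_cartesian_product p_def)
    have sub: "addsub H'"
      unfolding addsub_def
    proof safe
      show "0 \<in> H'" unfolding H'_def using less.prems(1) p2 unfolding addsub_def
        by (auto intro!: image_eqI[of _ _ "(0,0)"])
      fix x y assume "x \<in> H'" "y \<in> H'"
      then obtain h1 m1 h2 m2 where hm: "h1 \<in> H" "m1 < p" "h2 \<in> H" "m2 < p"
        "x = h1 + of_nat m1 * v" "y = h2 + of_nat m2 * v" unfolding H'_def by auto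
      have "x + y = (h1 + h2) + of_nat ((m1 + m2) mod p) * v"
        unfolding p_def of_nat_mod_CHAR' hm by (simp add: algebra_simps)
      moreover have "h1 + h2 \<in> H" using hm less.prems(1) unfolding addsub_def by auto
      moreover have "(m1 + m2) mod p < p" using p2 by simp
      ultimately show "x + y \<in> H'" unfolding H'_def
        by (intro image_eqI[of _ _ "(h1 + h2, (m1 + m2) mod p)"]) auto
    qed
    have "H \<subseteq> H'" unfolding H'_def using p2 by (force intro: image_eqI[of _ _ "(_,0)"])
    moreover have "v \<in> H'" unfolding H'_def using p2 less.prems(1) unfolding addsub_def
      by (force intro: image_eqI[of _ _ "(0,1)"])
    ultimately have "UNIV - H' \<subset> UNIV - H" using v by blast
    hence "card (UNIV - H') < card (UNIV - H)" by (intro psubset_card_mono) auto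
    thus ?thesis using less.hyps[OF _ sub cardH'] by blast
  qed
qed

lemma ff_card_pow: "\<exists>k. CARD('a::{field,finite}) = CHAR('a) ^ k"
  using addsub_grow[of "{0::'a}" 0] unfolding addsub_def by auto

lemma fd: "CARD('a::{field,finite}) = CHAR('a) ^ field_degree TYPE('a)"
proof -
  obtain k where k: "CARD('a) = CHAR('a) ^ k" using ff_card_pow by blast
  have "1 < CHAR('a)" using ff_prime[where 'a='a] prime_gt_1_nat by blast
  hence "(THE n. CARD('a) = CHAR('a) ^ n) = k" using k
    by (intro the_equality) (auto simp: power_inject_exp)
  thus ?thesis unfolding field_degree_def using k by simp
qed

lemma fd_pos: "field_degree TYPE('a::{field,finite}) \<ge> 1"
  using fd[where 'a='a] ff_card_ge2[where 'a='a]
  by (metis One_nat_def not_less_eq_eq numeral_le_one_iff power_0 semiring_norm(69) le_zero_eq)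

lemma pow_pn: "(x::'a::{field,finite}) ^ (CHAR('a) ^ field_degree TYPE('a)) = x"
  using ff_pow_card fd by metis

lemma sum_shift_cyc:
  assumes "f n = f 0"
  shows "(\<Sum>j<n. f (Suc j)) = (\<Sum>j<n. (f j :: 'b::ab_group_add))"
proof -
  have "(\<Sum>j<Suc n. f j) = f 0 + (\<Sum>j<n. f (Suc j))" by (rule sum.lessThan_Suc_shift)
  moreover have "(\<Sum>j<Suc n. f j) = (\<Sum>j<n. f j) + f n" by simp
  ultimately show ?thesis using assms by (simp add: add.commute)
qed

lemma trace_frob: "abs_trace (y::'a::{field,finite}) ^ CHAR('a) = abs_trace y"
proof -
  let ?p = "CHAR('a)" and ?n = "field_degree TYPE('a)"
  have "abs_trace y ^ ?p = (\<Sum>j<?n. (y ^ (?p ^ j)) ^ ?p)"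
    unfolding abs_trace_def by (rule freshmans_dream_sum[OF ff_prime refl])
  also have "\<dots> = (\<Sum>j<?n. y ^ (?p ^ Suc j))"
    by (simp add: power_mult[symmetric] mult.commute)
  also have "\<dots> = (\<Sum>j<?n. y ^ (?p ^ j))"
    by (rule sum_shift_cyc[where f="\<lambda>j. y ^ (?p ^ j)"]) (simp add: pow_pn)
  finally show ?thesis unfolding abs_trace_def .
qed

lemma of_nat_pow_char: "(of_nat m :: 'a::{field,finite}) ^ CHAR('a) = of_nat m"
proof (induction m)
  case 0 thus ?case using ff_prime[where 'a='a] by (simp add: prime_gt_0_nat)
next
  case (Suc m)
  have "(of_nat m + 1 :: 'a) ^ CHAR('a) = of_nat m ^ CHAR('a) + 1 ^ CHAR('a)"
    by (rule freshmans_dream[OF ff_prime refl])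
  thus ?case using Suc by (simp add: add.commute)
qed

lemma of_nat_inj_char: "a < CHAR('a::{field,finite}) \<Longrightarrow> b < CHAR('a) \<Longrightarrow> (of_nat a :: 'a) = of_nat b \<Longrightarrow> a = b"
proof (induction a b rule: linorder_wlog)
  case (le a b)
  hence "(of_nat (b - a) :: 'a) = 0" by (simp add: of_nat_diff)
  hence "b - a = 0" using of_nat_nz[where 'a='a, of "b - a"] le by linarith
  thus ?case using le by simp
qed (metis)

lemma prime_field_elem:
  assumes "(t::'a::{field,finite}) ^ CHAR('a) = t"
  shows "\<exists>m<CHAR('a). of_nat m = t"
proof (rule ccontr)
  assume nt: "\<not> ?thesis"
  let ?p = "CHAR('a)"
  define P where "P = monom (1::'a) ?p - [:0, 1:]"
  have p2: "?p \<ge> 2" using ff_prime[where 'a='a] prime_ge_2_nat by blast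
  have "coeff P ?p = 1" using p2 unfolding P_def by (simp add: coeff_pCons split: nat.split)
  hence P0: "P \<noteq> 0" by auto
  have "degree P \<le> ?p" unfolding P_def
    by (rule degree_le) (use p2 in \<open>auto simp: coeff_pCons split: nat.split\<close>)
  have rt: "poly P x = 0 \<longleftrightarrow> x ^ ?p = x" for x unfolding P_def by (simp add: poly_monom)
  have "insert t (of_nat ` {..<?p}) \<subseteq> {x. poly P x = 0}"
    using assms by (auto simp: rt of_nat_pow_char)
  hence "card (insert t (of_nat ` {..<?p})) \<le> card {x. poly P x = 0}"
    by (intro card_mono poly_roots_finite P0)
  also have "\<dots> \<le> ?p" using card_poly_roots_bound[OF P0] \<open>degree P \<le> ?p\<close> by linarith
  finally have "card (insert t (of_nat ` {..<?p})) \<le> ?p" .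
  moreover have "card (of_nat ` {..<?p} :: 'a set) = ?p"
    by (subst card_image) (auto intro!: inj_onI of_nat_inj_char)
  moreover have "t \<notin> (of_nat ` {..<?p} :: 'a set)" using nt by auto
  ultimately show False by simp
qed

lemma trace_nat: "abs_trace_nat (y::'a::{field,finite}) < CHAR('a) \<and> of_nat (abs_trace_nat y) = abs_trace y"
proof -
  obtain m where m: "m < CHAR('a)" "of_nat m = abs_trace y"
    using prime_field_elem[OF trace_frob] by blast
  have "abs_trace_nat y = m" unfolding abs_trace_nat_def
    by (rule the_equality) (use m of_nat_inj_char[where 'a='a] in auto)
  thus ?thesis using m by simp
qed

lemma pow_red:
  assumes "m \<ge> 1" "CARD('a) = Suc N"
  shows "(x::'a::{field,finite}) ^ m = x ^ ((m - 1) mod N + 1)"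
proof (cases "x = 0")
  case True thus ?thesis using assms by simp
next
  case False
  have xN: "x ^ N = 1" using ff_pow_card1[OF False] assms(2) by simp
  have "x ^ (m - 1) = x ^ (N * ((m - 1) div N) + (m - 1) mod N)" by simp
  also have "\<dots> = x ^ ((m - 1) mod N)" by (simp only: power_add power_mult xN) simp
  finally have "x ^ (m - 1) = x ^ ((m - 1) mod N)" .
  moreover have "x ^ m = x ^ (m - 1) * x" using assms(1) by (metis Suc_diff_le diff_Suc_1 power_Suc2)
  ultimately show ?thesis by simp
qed

lemma trace_nonzero:
  fixes d :: int and a :: "'a::{field,finite}"
  assumes g: "gcd d (int CARD('a) - 1) = 1"
    and nd: "\<not> degenerate TYPE('a) d"
    and a: "a \<noteq> 0"
  shows "\<exists>x. abs_trace (x powi d + a * x) \<noteq> 0"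
proof (rule ccontr)
  assume H: "\<not> ?thesis"
  let ?p = "CHAR('a)" and ?n = "field_degree TYPE('a)"
  define N where "N = CARD('a) - 1"
  have cardN: "CARD('a) = Suc N" unfolding N_def using ff_card_ge2[where 'a='a] by simp
  have iN: "int CARD('a) - 1 = int N" using cardN by simp
  have p1: "?p > 1" using ff_prime[where 'a='a] prime_gt_1_nat by blast
  have n1: "?n \<ge> 1" by (rule fd_pos)
  have pn: "?p ^ ?n = Suc N" using fd[where 'a='a] cardN by simp
  have N2: "N \<ge> 2"
  proof (rule ccontr)
    assume "\<not> N \<ge> 2"
    hence "N = 1" using ff_card_ge2[where 'a='a] cardN by linarith
    hence "degenerate TYPE('a) d" unfolding degenerate_def iN by (auto intro: exI[of _ 0])
    thus False using nd by blast
  qed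
  define r where "r = nat (d mod int N)"
  have rlt: "r < N" unfolding r_def using N2 by (simp add: nat_less_iff)
  have dr: "d mod int N = int r" unfolding r_def using N2 by simp
  have r0: "r \<noteq> 0"
  proof
    assume "r = 0"
    hence "int N dvd d" using dr by (simp add: dvd_eq_mod_eq_0)
    hence "gcd d (int N) = int N" by (simp add: gcd_proj2_iff)
    thus False using g iN N2 by simp
  qed
  have d0: "d \<noteq> 0" using dr r0 by auto
  have powi: "x powi d = x ^ r" for x :: 'a
  proof (cases "x = 0")
    case True thus ?thesis using d0 r0 by simp
  next
    case False
    have xN: "x ^ N = 1" using ff_pow_card1[OF False] cardN by simp
    have "d = int N * (d div int N) + int r" using dr by (metis mult_div_mod_eq)
    hence "x powi d = x powi (int N * (d div int N)) * x powi (int r)"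
      using False by (metis power_int_add)
    also have "x powi (int N * (d div int N)) = 1"
      by (simp add: power_int_mult xN)
    finally show ?thesis by simp
  qed
  have ndj: "r \<noteq> ?p ^ j mod N" for j
  proof
    assume "r = ?p ^ j mod N"
    hence "d mod (int CARD('a) - 1) = (int ?p ^ j) mod (int CARD('a) - 1)"
      unfolding iN dr by (simp add: zmod_int of_nat_power)
    thus False using nd unfolding degenerate_def by blast
  qed
  define e where "e j = (r * ?p ^ j - 1) mod N + 1" for j
  have rp1: "r * ?p ^ j \<ge> 1" for j using r0 p1 by (simp add: Suc_le_eq)
  have e_ne1: "e j \<noteq> 1" if "j < ?n" for j
  proof
    assume "e j = 1"
    hence "(r * ?p ^ j - 1) mod N = 0" unfolding e_def by simp
    moreover have "r * ?p ^ j = Suc (r * ?p ^ j - 1)" using rp1[of j] by (simp only: Suc_diff_1 One_nat_def Suc_le_eq)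
    hence "(r * ?p ^ j) mod N = Suc ((r * ?p ^ j - 1) mod N) mod N" by (metis mod_Suc_eq)
    ultimately have "(r * ?p ^ j) mod N = 1" using N2 by simp
    hence "(r * ?p ^ j * ?p ^ (?n - j)) mod N = (1 * ?p ^ (?n - j)) mod N"
      by (metis mod_mult_left_eq)
    moreover have "r * ?p ^ j * ?p ^ (?n - j) = r * Suc N"
      using that pn by (simp add: mult.assoc power_add[symmetric])
    moreover have "(r * Suc N) mod N = r" using rlt by simp
    ultimately have "r = ?p ^ (?n - j) mod N" by simp
    thus False using ndj by blast
  qed
  have e_le: "e j \<le> N" for j
  proof -
    have "(r * ?p ^ j - 1) mod N < N" using N2 by simp
    thus ?thesis unfolding e_def by linarith
  qed
  have tr: "abs_trace (x powi d + a * x) = (\<Sum>j<?n. x ^ e j) + (\<Sum>j<?n. a ^ (?p ^ j) * x ^ (?p ^ j))" for x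
  proof -
    have "abs_trace (x powi d + a * x) = (\<Sum>j<?n. (x ^ r + a * x) ^ (?p ^ j))"
      unfolding abs_trace_def powi ..
    also have "\<dots> = (\<Sum>j<?n. x ^ e j + a ^ (?p ^ j) * x ^ (?p ^ j))"
    proof (rule sum.cong[OF refl])
      fix j
      have "(x ^ r + a * x) ^ (?p ^ j) = (x ^ r) ^ (?p ^ j) + (a * x) ^ (?p ^ j)"
        by (rule freshmans_dream'[OF ff_prime refl])
      also have "(x ^ r) ^ (?p ^ j) = x ^ (r * ?p ^ j)" by (simp add: power_mult)
      also have "\<dots> = x ^ e j" unfolding e_def by (rule pow_red[OF rp1 cardN])
      finally show "(x ^ r + a * x) ^ (?p ^ j) = x ^ e j + a ^ (?p ^ j) * x ^ (?p ^ j)"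
        by (simp add: power_mult_distrib)
    qed
    finally show ?thesis by (simp add: sum.distrib)
  qed
  define Q where "Q = (\<Sum>j<?n. monom (1::'a) (e j)) + (\<Sum>j<?n. monom (a ^ (?p ^ j)) (?p ^ j))"
  have polyQ: "poly Q x = abs_trace (x powi d + a * x)" for x
    unfolding Q_def tr by (simp add: poly_sum poly_monom)
  have pjle: "?p ^ j \<le> N" if "j < ?n" for j
  proof -
    have "?p ^ j < ?p ^ ?n" using that p1 by (simp add: power_strict_increasing)
    thus ?thesis using pn by simp
  qed
  have coeffQ: "coeff Q k = (\<Sum>j<?n. if e j = k then 1 else 0) + (\<Sum>j<?n. if ?p ^ j = k then a ^ (?p ^ j) else 0)" for k
    unfolding Q_def by (simp add: coeff_sum)
  have "degree Q \<le> N"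
  proof (rule degree_le, intro allI impI)
    fix k assume "N < k"
    have 1: "e j \<noteq> k" for j using e_le[of j] \<open>N < k\<close> by linarith
    have 2: "?p ^ j \<noteq> k" if "j < ?n" for j using pjle[OF that] \<open>N < k\<close> by linarith
    have "(\<Sum>j<?n. if e j = k then (1::'a) else 0) = 0" using 1 by simp
    moreover have "(\<Sum>j<?n. if ?p ^ j = k then a ^ (?p ^ j) else 0) = 0"
      using 2 by (intro sum.neutral ballI) simp
    ultimately show "coeff Q k = 0" unfolding coeffQ by simp
  qed
  have c1: "coeff Q 1 = a"
  proof -
    have "(\<Sum>j<?n. if e j = 1 then (1::'a) else 0) = 0" using e_ne1 by (auto intro!: sum.neutral)
    moreover have "(\<Sum>j<?n. if ?p ^ j = 1 then a ^ (?p ^ j) else 0) = (\<Sum>j<?n. if j = 0 then a else 0)"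
      using p1 by (intro sum.cong) auto
    moreover have "(\<Sum>j<?n. if j = 0 then a else 0) = a" using n1 by (simp add: sum.delta)
    ultimately show ?thesis unfolding coeffQ by simp
  qed
  hence Q0: "Q \<noteq> 0" using a by auto
  have "{x. poly Q x = 0} = UNIV" using H polyQ by auto
  hence "CARD('a) \<le> degree Q" using card_poly_roots_bound[OF Q0] by simp
  thus False using \<open>degree Q \<le> N\<close> cardN by simp
qed

lemma norm_1_plus_lt2:
  fixes v :: complex
  assumes "norm v = 1" "v \<noteq> 1"
  shows "norm (1 + v) < 2"
proof -
  have h: "(Re v)^2 + (Im v)^2 = 1" using assms(1) unfolding cmod_def
    by (metis real_sqrt_eq_1_iff)
  have "Re v \<noteq> 1 \<or> Im v \<noteq> 0" using assms(2) complex_eq_iff by auto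
  moreover have "(Im v)^2 \<ge> 0" by simp
  hence "(Re v)^2 \<le> 1" using h by linarith
  hence "\<bar>Re v\<bar> \<le> 1" by (simp add: abs_square_le_1)
  hence "Re v \<le> 1" by linarith
  moreover have "Im v = 0" if "Re v = 1" using h that by simp
  ultimately have "Re v < 1" by fastforce
  hence "(Re (1 + v))^2 + (Im (1 + v))^2 < 2^2" using h by (simp add: power2_eq_square algebra_simps)
  hence "sqrt ((Re (1 + v))^2 + (Im (1 + v))^2) < sqrt (2^2)" by (subst real_sqrt_less_iff) simp
  thus ?thesis unfolding cmod_def by simp
qed

lemma canon_exp: "canon_add_char (y::'a::{field,finite}) = exp (\<i> * complex_of_real (2 * pi * real (abs_trace_nat y) / real CHAR('a)))"
proof -
  have "complex_of_real (2 * pi * real (abs_trace_nat y) / real CHAR('a))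
     = 2 * complex_of_real pi * of_nat (abs_trace_nat y) / of_nat CHAR('a)" by simp
  thus ?thesis unfolding canon_add_char_def by (simp add: mult_ac)
qed

lemma norm_canon: "norm (canon_add_char (y::'a::{field,finite})) = 1"
  unfolding canon_exp by (rule norm_exp_i_times)

lemma canon_ne1:
  assumes "abs_trace (y::'a::{field,finite}) \<noteq> 0"
  shows "canon_add_char y \<noteq> 1"
proof
  let ?m = "abs_trace_nat y" and ?p = "CHAR('a)"
  have m: "?m < ?p" "of_nat ?m = abs_trace y" using trace_nat[of y] by auto
  have m0: "?m \<noteq> 0"
  proof
    assume "?m = 0"
    thus False using m(2) assms by simp
  qed
  have p0: "real ?p > 0" using ff_prime[where 'a='a] prime_gt_0_nat by simp
  assume "canon_add_char y = 1"
  then obtain n :: int where "2 * pi * real ?m / real ?p = of_int (2 * n) * pi"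
    unfolding canon_exp exp_eq_1 by auto
  hence "pi * (2 * real ?m) = pi * (2 * (of_int n * real ?p))" using p0 by (simp add: field_simps)
  hence "real ?m = of_int n * real ?p" using pi_gt_zero by simp
  hence "int ?m = n * int ?p" by (metis of_int_eq_iff of_int_mult of_int_of_nat_eq)
  hence "int ?p dvd int ?m" by simp
  hence "?p dvd ?m" by simp
  thus False using m m0 by (auto dest: dvd_imp_le)
qed

lemma trace0: "abs_trace (0::'a::{field,finite}) = 0"
proof -
  have "CHAR('a) \<noteq> 0" using ff_prime[where 'a='a] by (auto simp: prime_gt_0_nat)
  thus ?thesis unfolding abs_trace_def by (intro sum.neutral ballI) simp
qed

lemma canon0: "canon_add_char (0::'a::{field,finite}) = 1"
proof -
  have t0: "abs_trace (0::'a) = 0" by (rule trace0)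
  have "abs_trace_nat (0::'a) = 0"
    using trace_nat[of "0::'a"] t0 of_nat_inj_char[where 'a='a, of _ 0] ff_prime[where 'a='a]
    by (simp add: prime_gt_0_nat)
  thus ?thesis unfolding canon_add_char_def by simp
qed

theorem corollary2p2:
  fixes d :: int and a :: "'a::{field,finite}"
  assumes "gcd d (int CARD('a) - 1) = 1"
    and "\<not> degenerate TYPE('a) d"
    and "a \<noteq> 0"
  shows "norm (weil_sum d a) < real CARD('a)"
proof -
  define f where "f x = x powi d + a * x" for x :: 'a
  obtain x0 where x0: "abs_trace (f x0) \<noteq> 0" using trace_nonzero[OF assms] unfolding f_def by blast
  have d0: "d \<noteq> 0"
  proof
    assume "d = 0"
    hence "int CARD('a) - 1 = 1" using assms(1) ff_card_ge2[where 'a='a] by simp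
    hence "degenerate TYPE('a) d" unfolding degenerate_def by (auto intro: exI[of _ 0])
    thus False using assms(2) by blast
  qed
  have f0: "f 0 = 0" unfolding f_def using d0 by simp
  have x00: "x0 \<noteq> 0" using x0 f0 trace0[where 'a='a] by auto
  define v where "v = canon_add_char (f x0)"
  have v: "norm v = 1" "v \<noteq> 1" unfolding v_def using norm_canon canon_ne1[OF x0] by auto
  define R where "R = (UNIV::'a set) - {0} - {x0}"
  have W: "weil_sum d a = 1 + v + (\<Sum>x\<in>R. canon_add_char (f x))"
  proof -
    have "weil_sum d a = canon_add_char (f 0) + (\<Sum>x\<in>UNIV - {0}. canon_add_char (f x))"
      unfolding weil_sum_def f_def by (rule sum.remove) auto
    also have "(\<Sum>x\<in>UNIV - {0}. canon_add_char (f x)) = canon_add_char (f x0) + (\<Sum>x\<in>R. canon_add_char (f x))"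
      unfolding R_def by (rule sum.remove) (use x00 in auto)
    finally show ?thesis using f0 canon0 unfolding v_def by (simp add: add.assoc)
  qed
  have cR: "card R = CARD('a) - 2" unfolding R_def using x00
    by (simp add: card_Diff_singleton_if)
  have "norm (\<Sum>x\<in>R. canon_add_char (f x)) \<le> (\<Sum>x\<in>R. norm (canon_add_char (f x)))"
    by (rule norm_sum)
  also have "\<dots> = real (card R)" by (simp add: norm_canon)
  finally have nR: "norm (\<Sum>x\<in>R. canon_add_char (f x)) \<le> real (card R)" .
  have "norm (weil_sum d a) \<le> norm (1 + v) + norm (\<Sum>x\<in>R. canon_add_char (f x))"
    unfolding W by (rule norm_triangle_ineq)
  also have "\<dots> < 2 + real (card R)" using nR norm_1_plus_lt2[OF v] by linarith
  also have "\<dots> = real CARD('a)" using cR ff_card_ge2[where 'a='a] by simp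
  finally show ?thesis .
qed

end
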